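(* Let $(X,d_X)$ be a metric space and let $r,R\in(0,\infty)$. (i) $\Delta_X^{(c)}$ and $\Delta_X^{(u)}$ are non-decreasing functions. (ii) If $\Delta_X^{(c)}(R)<\infty$, then $\Delta_X^{(u)}(\Delta_X^{(c)}(R)+\varepsilon)\geq R$ for all $\varepsilon>0$. (iii) If $\Delta_X^{(u)}(r)>0$, then $\Delta_X^{(c)}(\Delta_X^{(u)}(r)-\varepsilon)\leq r$ for all $0<\varepsilon<\Delta_X^{(u)}(r)$. (iv) $\Delta_X^{(u)}(s)>0$ for all $s>0$ if and only if $\lim_{R\to0}\Delta_X^{(c)}(R)=0$. (v) $\Delta_X^{(c)}(s)<\infty$ for all $s\in[0,\infty)$ if and only if $\lim_{r\to\infty}\Delta_X^{(u)}(r)=\infty$.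
   Context: For a cover $\mathcal{U}$ of $X$: $\mathrm{diam}(\mathcal{U})=\sup_{U\in\mathcal{U}}\mathrm{diam}(U)$; $\mathcal{L}(\mathcal{U})=\sup\{d\in[0,\infty): \text{every } E\subseteq X \text{ with } \mathrm{diam}(E)<d \text{ is contained in some } U\in\mathcal{U}\}$; point-finite means each point lies in only finitely many members. $\Delta_X^{(u)},\Delta_X^{(c)}\colon[0,\infty)\to[0,\infty]$ are $\Delta_X^{(u)}(r)=\sup\{\mathcal{L}(\mathcal{U}): \mathcal{U} \text{ point-finite cover of } X,\ \mathrm{diam}(\mathcal{U})\leq r\}$ and $\Delta_X^{(c)}(R)=\inf\{\mathrm{diam}(\mathcal{U}): \mathcal{U} \text{ point-finite cover of } X,\ \mathcal{L}(\mathcal{U})\geq R\}$. (The condition in (iv) is the uniform Stone property and in (v) the coarse Stone property.) *)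

theory Defs
  imports "HOL-Analysis.Analysis" "HOL-Library.Extended_Real"
begin

text \<open>Diameter with values in [0,\<infinity>]; the empty set has diameter 0.\<close>
definition ediam :: "'a::metric_space set \<Rightarrow> ereal" where
  "ediam E = sup 0 (SUP p\<in>E \<times> E. ereal (dist (fst p) (snd p)))"

definition cover_diam :: "'a::metric_space set set \<Rightarrow> ereal" where
  "cover_diam \<U> = sup 0 (SUP U\<in>\<U>. ediam U)"

definition is_cover :: "'a set \<Rightarrow> 'a set set \<Rightarrow> bool" where
  "is_cover X \<U> \<longleftrightarrow> (\<forall>U\<in>\<U>. U \<subseteq> X) \<and> \<Union>\<U> = X"

definition point_finite :: "'a set \<Rightarrow> 'a set set \<Rightarrow> bool" where
  "point_finite X \<U> \<longleftrightarrow> (\<forall>x\<in>X. finite {U\<in>\<U>. x \<in> U})"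

definition lebesgue_num :: "'a::metric_space set \<Rightarrow> 'a set set \<Rightarrow> ereal" where
  "lebesgue_num X \<U> = (SUP d\<in>{d::real. 0 \<le> d \<and>
      (\<forall>E. E \<subseteq> X \<and> ediam E < ereal d \<longrightarrow> (\<exists>U\<in>\<U>. E \<subseteq> U))}. ereal d)"

definition Delta_u :: "'a::metric_space set \<Rightarrow> ereal \<Rightarrow> ereal" where
  "Delta_u X r = (SUP \<U>\<in>{\<U>. is_cover X \<U> \<and> point_finite X \<U> \<and> cover_diam \<U> \<le> r}.
      lebesgue_num X \<U>)"

definition Delta_c :: "'a::metric_space set \<Rightarrow> ereal \<Rightarrow> ereal" where
  "Delta_c X R = (INF \<U>\<in>{\<U>. is_cover X \<U> \<and> point_finite X \<U> \<and> lebesgue_num X \<U> \<ge> R}.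
      cover_diam \<U>)"

end

theory Submission
  imports Defs
begin

lemma cd_nonneg: "0 \<le> cover_diam U" unfolding cover_diam_def by simp

lemma Dc_nonneg: "0 \<le> Delta_c X R"
  unfolding Delta_c_def by (rule INF_greatest) (simp add: cd_nonneg)

lemma Dc_lt:
  assumes "Delta_c X R < c"
  shows "\<exists>U. is_cover X U \<and> point_finite X U \<and> lebesgue_num X U \<ge> R \<and> cover_diam U < c"
  using assms unfolding Delta_c_def INF_less_iff by auto

lemma Du_gt:
  assumes "c < Delta_u X r"
  shows "\<exists>U. is_cover X U \<and> point_finite X U \<and> cover_diam U \<le> r \<and> c < lebesgue_num X U"
  using assms unfolding Delta_u_def less_SUP_iff by auto

lemma Du_ge:
  assumes "is_cover X U" "point_finite X U" "cover_diam U \<le> r"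
  shows "lebesgue_num X U \<le> Delta_u X r"
  unfolding Delta_u_def by (rule SUP_upper) (use assms in auto)

lemma Dc_le:
  assumes "is_cover X U" "point_finite X U" "lebesgue_num X U \<ge> R"
  shows "Delta_c X R \<le> cover_diam U"
  unfolding Delta_c_def by (rule INF_lower) (use assms in auto)

lemma ediam_ge: "x \<in> E \<Longrightarrow> y \<in> E \<Longrightarrow> ereal (dist x y) \<le> ediam E"
  unfolding ediam_def
  by (rule order_trans[OF _ sup_ge2], rule SUP_upper2[of "(x,y)"]) auto

lemma ediam_le: "(\<And>x y. x \<in> E \<Longrightarrow> y \<in> E \<Longrightarrow> dist x y \<le> r) \<Longrightarrow> 0 \<le> r \<Longrightarrow> ediam E \<le> ereal r"
  unfolding ediam_def by (auto intro!: SUP_least)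

lemma cd_ge: "U \<in> \<U> \<Longrightarrow> ediam U \<le> cover_diam \<U>"
  unfolding cover_diam_def
  by (rule order_trans[OF _ sup_ge2], rule SUP_upper) auto

lemma Dc_bounded:
  assumes "\<And>x y. x \<in> X \<Longrightarrow> y \<in> X \<Longrightarrow> dist x y \<le> r" "0 \<le> r"
  shows "Delta_c X R \<le> ereal r"
proof -
  have cov: "is_cover X {X}" unfolding is_cover_def by auto
  have pf: "point_finite X {X}" unfolding point_finite_def by auto
  have leb: "lebesgue_num X {X} = \<infinity>"
  proof (rule ereal_top)
    fix B :: real
    have m: "max 0 B \<in> {d::real. 0 \<le> d \<and>
      (\<forall>E. E \<subseteq> X \<and> ediam E < ereal d \<longrightarrow> (\<exists>U\<in>{X}. E \<subseteq> U))}" by simp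
    have "ereal (max 0 B) \<le> lebesgue_num X {X}"
      unfolding lebesgue_num_def by (rule SUP_upper[OF m])
    moreover have "ereal B \<le> ereal (max 0 B)" by simp
    ultimately show "ereal B \<le> lebesgue_num X {X}"
      by (rule order_trans[rotated])
  qed
  have "cover_diam {X} \<le> ereal r"
    unfolding cover_diam_def using ediam_le[OF assms(1) assms(2)] assms(2) by auto
  moreover have "Delta_c X R \<le> cover_diam {X}"
    by (rule Dc_le[OF cov pf]) (simp add: leb)
  ultimately show ?thesis by simp
qed

lemma Du_inf:
  assumes "Delta_u X (ereal r) = \<infinity>" "x \<in> X" "y \<in> X"
  shows "dist x y \<le> r"
proof (rule ccontr)
  assume nl: "\<not> dist x y \<le> r"
  have "ereal (dist x y) < Delta_u X (ereal r)" using assms by simp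
  then obtain U where U: "is_cover X U" "point_finite X U" "cover_diam U \<le> ereal r"
      "ereal (dist x y) < lebesgue_num X U" using Du_gt by blast
  then obtain d where d: "0 \<le> d" "\<forall>E. E \<subseteq> X \<and> ediam E < ereal d \<longrightarrow> (\<exists>V\<in>U. E \<subseteq> V)"
      "dist x y < d"
    unfolding lebesgue_num_def less_SUP_iff by auto
  have "ediam {x,y} \<le> ereal (dist x y)"
    by (rule ediam_le) (auto simp: dist_commute)
  then have "ediam {x,y} < ereal d" using d(3) by (simp add: le_less_trans)
  then obtain V where V: "V \<in> U" "{x,y} \<subseteq> V" using d(2)[rule_format, of "{x,y}"] assms by auto
  have "ereal (dist x y) \<le> ediam V" using V by (intro ediam_ge) auto
  also have "\<dots> \<le> cover_diam U" by (rule cd_ge[OF V(1)])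
  also have "\<dots> \<le> ereal r" by fact
  finally show False using nl by simp
qed

theorem lemma3p4:
  fixes X :: "'a::metric_space set" and r R :: real
  assumes "0 < r" and "0 < R"
  shows "mono_on {0::real..} (\<lambda>s. Delta_c X (ereal s))
       \<and> mono_on {0::real..} (\<lambda>s. Delta_u X (ereal s))
       \<and> (Delta_c X (ereal R) < \<infinity> \<longrightarrow>
            (\<forall>\<epsilon>::real. 0 < \<epsilon> \<longrightarrow> Delta_u X (Delta_c X (ereal R) + ereal \<epsilon>) \<ge> ereal R))
       \<and> (Delta_u X (ereal r) > 0 \<longrightarrow>
            (\<forall>\<epsilon>::real. 0 < \<epsilon> \<and> ereal \<epsilon> < Delta_u X (ereal r) \<longrightarrow>
                Delta_c X (Delta_u X (ereal r) - ereal \<epsilon>) \<le> ereal r))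
       \<and> ((\<forall>s::real. 0 < s \<longrightarrow> Delta_u X (ereal s) > 0) \<longleftrightarrow>
            ((\<lambda>s. Delta_c X (ereal s)) \<longlongrightarrow> 0) (at_right 0))
       \<and> ((\<forall>s::real. 0 \<le> s \<longrightarrow> Delta_c X (ereal s) < \<infinity>) \<longleftrightarrow>
            ((\<lambda>s. Delta_u X (ereal s)) \<longlongrightarrow> \<infinity>) at_top)"
proof (intro conjI)
  show "mono_on {0::real..} (\<lambda>s. Delta_c X (ereal s))"
  proof (rule mono_onI)
    fix s t :: real assume "s \<le> t"
    then have st: "ereal s \<le> ereal t" by simp
    show "Delta_c X (ereal s) \<le> Delta_c X (ereal t)"
      unfolding Delta_c_def
      by (rule INF_superset_mono) (use st in \<open>auto dest: order_trans[OF st]\<close>)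
  qed
  show "mono_on {0::real..} (\<lambda>s. Delta_u X (ereal s))"
  proof (rule mono_onI)
    fix s t :: real assume "s \<le> t"
    then have st: "ereal s \<le> ereal t" by simp
    show "Delta_u X (ereal s) \<le> Delta_u X (ereal t)"
      unfolding Delta_u_def
      by (rule SUP_subset_mono) (use st in \<open>auto intro: order_trans[OF _ st]\<close>)
  qed
  show "Delta_c X (ereal R) < \<infinity> \<longrightarrow>
        (\<forall>\<epsilon>::real. 0 < \<epsilon> \<longrightarrow> Delta_u X (Delta_c X (ereal R) + ereal \<epsilon>) \<ge> ereal R)"
  proof (intro impI allI)
    fix e :: real assume fin: "Delta_c X (ereal R) < \<infinity>" and e: "0 < e"
    obtain c where c: "Delta_c X (ereal R) = ereal c"
      using fin Dc_nonneg[of X "ereal R"] by (cases "Delta_c X (ereal R)") auto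
    have "Delta_c X (ereal R) < Delta_c X (ereal R) + ereal e" using c e by simp
    then obtain U where U: "is_cover X U" "point_finite X U" "lebesgue_num X U \<ge> ereal R"
        "cover_diam U < Delta_c X (ereal R) + ereal e" using Dc_lt by blast
    have "ereal R \<le> lebesgue_num X U" by fact
    also have "\<dots> \<le> Delta_u X (Delta_c X (ereal R) + ereal e)"
      using U by (intro Du_ge) auto
    finally show "Delta_u X (Delta_c X (ereal R) + ereal e) \<ge> ereal R" .
  qed
  show "Delta_u X (ereal r) > 0 \<longrightarrow>
            (\<forall>\<epsilon>::real. 0 < \<epsilon> \<and> ereal \<epsilon> < Delta_u X (ereal r) \<longrightarrow>
                Delta_c X (Delta_u X (ereal r) - ereal \<epsilon>) \<le> ereal r)"
  proof (intro impI allI)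
    fix e :: real assume pos: "Delta_u X (ereal r) > 0" and e: "0 < e \<and> ereal e < Delta_u X (ereal r)"
    show "Delta_c X (Delta_u X (ereal r) - ereal e) \<le> ereal r"
    proof (cases "Delta_u X (ereal r) = \<infinity>")
      case True
      show ?thesis by (rule Dc_bounded) (use Du_inf[OF True] assms in auto)
    next
      case False
      then obtain u where u: "Delta_u X (ereal r) = ereal u" using pos by (cases "Delta_u X (ereal r)") auto
      have "Delta_u X (ereal r) - ereal e < Delta_u X (ereal r)" using u e by simp
      then obtain U where U: "is_cover X U" "point_finite X U" "cover_diam U \<le> ereal r"
          "Delta_u X (ereal r) - ereal e < lebesgue_num X U" using Du_gt by blast
      have "Delta_c X (Delta_u X (ereal r) - ereal e) \<le> cover_diam U"
        using U by (intro Dc_le) auto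
      then show ?thesis using U(3) by simp
    qed
  qed
  show "(\<forall>s::real. 0 < s \<longrightarrow> Delta_u X (ereal s) > 0) \<longleftrightarrow>
            ((\<lambda>s. Delta_c X (ereal s)) \<longlongrightarrow> 0) (at_right 0)"
  proof
    assume H: "\<forall>s::real. 0 < s \<longrightarrow> Delta_u X (ereal s) > 0"
    show "((\<lambda>s. Delta_c X (ereal s)) \<longlongrightarrow> 0) (at_right 0)"
    proof (rule order_tendstoI)
      fix a :: ereal assume "a < 0"
      then show "\<forall>\<^sub>F x in at_right 0. a < Delta_c X (ereal x)"
        using Dc_nonneg[of X] by (intro always_eventually allI) (blast intro: less_le_trans)
    next
      fix a :: ereal assume "0 < a"
      then obtain eta where eta: "0 < ereal eta" "ereal eta < a" using ereal_dense2 by blast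
      then have "0 < Delta_u X (ereal eta)" using H by simp
      then obtain dl where dl: "0 < ereal dl" "ereal dl < Delta_u X (ereal eta)" using ereal_dense2 by blast
      then obtain U where U: "is_cover X U" "point_finite X U" "cover_diam U \<le> ereal eta"
          "ereal dl < lebesgue_num X U" using Du_gt by blast
      have "\<forall>y>0. y < dl \<longrightarrow> Delta_c X (ereal y) < a"
      proof (intro allI impI)
        fix y :: real assume "0 < y" "y < dl"
        then have "ereal y \<le> lebesgue_num X U"
          using U(4) by (metis ereal_less_le less_imp_le order_trans)
        then have "Delta_c X (ereal y) \<le> cover_diam U"
          using U by (intro Dc_le) auto
        then show "Delta_c X (ereal y) < a" using U(3) eta(2) by simp
      qed
      then show "\<forall>\<^sub>F x in at_right 0. Delta_c X (ereal x) < a"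
        using dl(1) by (subst eventually_at_right[of 0 dl]) auto
    qed
  next
    assume T: "((\<lambda>s. Delta_c X (ereal s)) \<longlongrightarrow> 0) (at_right 0)"
    show "\<forall>s::real. 0 < s \<longrightarrow> Delta_u X (ereal s) > 0"
    proof (intro allI impI)
      fix s :: real assume s: "0 < s"
      have "\<forall>\<^sub>F x in at_right 0. Delta_c X (ereal x) < ereal s"
        using order_tendstoD(2)[OF T] s by simp
      then obtain b where b: "b > 0" "\<forall>y>0. y < b \<longrightarrow> Delta_c X (ereal y) < ereal s"
        by (subst (asm) eventually_at_right[of 0 1]) auto
      then have "Delta_c X (ereal (b/2)) < ereal s" by simp
      then obtain U where U: "is_cover X U" "point_finite X U" "lebesgue_num X U \<ge> ereal (b/2)"
          "cover_diam U < ereal s" using Dc_lt by blast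
      have "0 < ereal (b/2)" using b by simp
      also have "\<dots> \<le> lebesgue_num X U" by fact
      also have "\<dots> \<le> Delta_u X (ereal s)" using U by (intro Du_ge) auto
      finally show "Delta_u X (ereal s) > 0" .
    qed
  qed
  show "(\<forall>s::real. 0 \<le> s \<longrightarrow> Delta_c X (ereal s) < \<infinity>) \<longleftrightarrow>
            ((\<lambda>s. Delta_u X (ereal s)) \<longlongrightarrow> \<infinity>) at_top"
  proof
    assume H: "\<forall>s::real. 0 \<le> s \<longrightarrow> Delta_c X (ereal s) < \<infinity>"
    show "((\<lambda>s. Delta_u X (ereal s)) \<longlongrightarrow> \<infinity>) at_top"
      unfolding tendsto_PInfty
    proof
      fix M :: real
      define s where "s = max 0 (M+1)"
      have "0 \<le> s" unfolding s_def by simp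
      then have "Delta_c X (ereal s) < \<infinity>" using H by blast
      then obtain z where z: "Delta_c X (ereal s) < ereal z" using ereal_dense2 by blast
      then obtain U where U: "is_cover X U" "point_finite X U" "lebesgue_num X U \<ge> ereal s"
          "cover_diam U < ereal z" using Dc_lt by blast
      have "\<forall>n\<ge>z. ereal M < Delta_u X (ereal n)"
      proof (intro allI impI)
        fix n assume "z \<le> n"
        have "M < s" unfolding s_def by linarith
        then have "ereal M < ereal s" by simp
        also have "\<dots> \<le> lebesgue_num X U" by fact
        also have "\<dots> \<le> Delta_u X (ereal n)"
        proof (rule Du_ge[OF U(1,2)])
          show "cover_diam U \<le> ereal n" using U(4) \<open>z \<le> n\<close>
            by (metis ereal_less_eq(3) less_imp_le order_trans)
        qed
        finally show "ereal M < Delta_u X (ereal n)" .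
      qed
      then show "\<forall>\<^sub>F x in at_top. ereal M < Delta_u X (ereal x)"
        unfolding eventually_at_top_linorder by blast
    qed
  next
    assume T: "((\<lambda>s. Delta_u X (ereal s)) \<longlongrightarrow> \<infinity>) at_top"
    show "\<forall>s::real. 0 \<le> s \<longrightarrow> Delta_c X (ereal s) < \<infinity>"
    proof (intro allI impI)
      fix s :: real assume "0 \<le> s"
      have "\<forall>\<^sub>F x in at_top. ereal s < Delta_u X (ereal x)" using T unfolding tendsto_PInfty by blast
      then obtain N where "\<forall>n\<ge>N. ereal s < Delta_u X (ereal n)"
        unfolding eventually_at_top_linorder by blast
      then have "ereal s < Delta_u X (ereal N)" by simp
      then obtain U where U: "is_cover X U" "point_finite X U" "cover_diam U \<le> ereal N"
          "ereal s < lebesgue_num X U" using Du_gt by blast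
      have "Delta_c X (ereal s) \<le> cover_diam U" using U by (intro Dc_le) auto
      then have "Delta_c X (ereal s) \<le> ereal N" using U(3) by (rule order_trans)
      moreover have "ereal N < \<infinity>" by simp
      ultimately show "Delta_c X (ereal s) < \<infinity>" by (rule order_le_less_trans)
    qed
  qed
qed

end
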